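(* Let $\epsilon\in(0,1/4]$. Define ${\rm sign}(x)=1$ if $x\ge0$ and ${\rm sign}(x)=-1$ otherwise. Define the sequence $(y(t))_{t\ge1}$ by $y(1)=0$ and $$y(t+1)=(1-\epsilon)y(t)-\frac{\frac12(1-\epsilon)\,{\rm sign}(y(t)-1)+\epsilon\Delta(t)}{\sqrt t},\qquad \Delta(t)=\frac{\epsilon\sqrt t\,y(t)-\frac{\epsilon}{2}{\rm sign}(y(t)-1)}{1-\epsilon}.$$ Then $y(t)\in[0,2]$ for all $t$; $y(t)\le\frac{2\epsilon^{-1}}{\sqrt t}$ for all $t$; and there exists $t_1$ such that $y(t)\ge\frac{\epsilon^{-1}}{16\sqrt t}$ for all $t\ge t_1$. *)

theory Defs
  imports Complex_Main
begin

definition sgnp :: "real \<Rightarrow> real" where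
  "sgnp x = (if x \<ge> 0 then 1 else -1)"

definition Delta :: "real \<Rightarrow> nat \<Rightarrow> real \<Rightarrow> real" where
  "Delta eps t y = (eps * sqrt (real t) * y - (eps / 2) * sgnp (y - 1)) / (1 - eps)"

(* yseq eps t is y(t) for t \<ge> 1; the value at t = 0 is an unused junk value *)
fun yseq :: "real \<Rightarrow> nat \<Rightarrow> real" where
  "yseq eps 0 = 0"
| "yseq eps (Suc t) =
     (if t = 0 then 0
      else (1 - eps) * yseq eps t
           - ((1/2) * (1 - eps) * sgnp (yseq eps t - 1) + eps * Delta eps t (yseq eps t))
             / sqrt (real t))"

end

theory Submission
  imports Defs
begin

lemma yrec:
  assumes e0: "0 < eps" and e1: "eps \<le> 1/4" and t1: "t \<ge> 1"
  shows "yseq eps (Suc t) = ((1-2*eps)/(1-eps)) * (yseq eps t - sgnp (yseq eps t - 1)/(2*sqrt (real t)))"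
proof -
  have s: "sqrt (real t) > 0" using t1 by simp
  have ne: "1 - eps \<noteq> 0" using e1 by simp
  have "t \<noteq> 0" using t1 by simp
  then show ?thesis using s ne
    by (simp add: Delta_def field_simps)
qed

lemma a_bounds:
  fixes eps :: real
  assumes e0: "0 < eps" and e1: "eps \<le> 1/4"
  shows "(1-2*eps)/(1-eps) \<ge> 0" "(1-2*eps)/(1-eps) \<le> 1 - eps" "(1-2*eps)/(1-eps) \<le> 1"
    "(1-2*eps)/(1-eps) \<ge> 2/3"
proof -
  have d: "1 - eps > 0" using e1 by simp
  show "(1-2*eps)/(1-eps) \<ge> 0" using d e1 by simp
  show "(1-2*eps)/(1-eps) \<le> 1 - eps" using d e0 by (simp add: field_simps)
  show "(1-2*eps)/(1-eps) \<le> 1" using d e0 by (simp add: field_simps)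
  show "(1-2*eps)/(1-eps) \<ge> 2/3" using d e1 by (simp add: field_simps)
qed

lemma aux02:
  fixes a x :: real
  assumes "0 \<le> a" "a \<le> 1" "0 \<le> x" "x \<le> 2"
  shows "0 \<le> a * x \<and> a * x \<le> 2"
proof -
  have "a * x \<le> 1 * x" using assms by (intro mult_right_mono) auto
  then show ?thesis using assms by simp
qed

lemma bnd02:
  assumes e0: "0 < eps" and e1: "eps \<le> 1/4"
  shows "t \<ge> 1 \<Longrightarrow> 0 \<le> yseq eps t \<and> yseq eps t \<le> 2"
proof (induction t rule: dec_induct)
  case base
  then show ?case by simp
next
  case (step t)
  define a where "a = (1-2*eps)/(1-eps)"
  define y where "y = yseq eps t"
  define s where "s = sqrt (real t)"
  have s1: "s \<ge> 1" using step s_def by simp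
  have a0: "0 \<le> a" "a \<le> 1" using a_bounds(1,3)[OF e0 e1] unfolding a_def by auto
  have r: "yseq eps (Suc t) = a * (y - sgnp (y - 1)/(2*s))"
    using yrec[OF e0 e1 step(1)] a_def y_def s_def by simp
  have hs: "1/(2*s) \<le> 1/2" "1/(2*s) \<ge> 0" using s1 by (auto simp: field_simps)
  show ?case
  proof (cases "y \<ge> 1")
    case True
    then have "yseq eps (Suc t) = a * (y - 1/(2*s))" using r by (simp add: sgnp_def)
    moreover have "0 \<le> y - 1/(2*s)" "y - 1/(2*s) \<le> 2" using True hs step(3) y_def by linarith+
    ultimately show ?thesis using a0 by (simp add: aux02)
  next
    case False
    then have "yseq eps (Suc t) = a * (y + 1/(2*s))" using r by (simp add: sgnp_def)
    moreover have "0 \<le> y + 1/(2*s)" "y + 1/(2*s) \<le> 2" using False hs step(3) y_def by linarith+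
    ultimately show ?thesis using a0 by (simp add: aux02)
  qed
qed

lemma sq_le_sqrt:
  fixes c :: real and t :: nat
  assumes "0 \<le> c" "c^2 * (real t + 1) \<le> real t"
  shows "c * sqrt (real (Suc t)) \<le> sqrt (real t)"
proof -
  have "(c * sqrt (real (Suc t)))^2 = c^2 * (real t + 1)"
    by (simp add: power_mult_distrib)
  then have "(c * sqrt (real (Suc t)))^2 \<le> (sqrt (real t))^2" using assms by simp
  then show ?thesis by (rule power2_le_imp_le) simp
qed

lemma bndup:
  assumes e0: "0 < eps" and e1: "eps \<le> 1/4"
  shows "t \<ge> 1 \<Longrightarrow> yseq eps t \<le> 2 / (eps * sqrt (real t))"
proof (induction t rule: dec_induct)
  case base
  then show ?case using e0 by simp
next
  case (step t)
  define a where "a = (1-2*eps)/(1-eps)"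
  define y where "y = yseq eps t"
  define s where "s = sqrt (real t)"
  define r where "r = sqrt (real (Suc t))"
  have s1: "s \<ge> 1" using step s_def by simp
  have r0: "r > 0" using r_def by simp
  have a0: "0 \<le> a" "a \<le> 1 - eps" using a_bounds(1,2)[OF e0 e1] unfolding a_def by auto
  have r: "yseq eps (Suc t) = a * (y - sgnp (y - 1)/(2*s))"
    using yrec[OF e0 e1 step(1)] a_def y_def s_def by simp
  have IH: "y \<le> 2 / (eps * s)" using step(3) y_def s_def by simp
  have b2: "yseq eps (Suc t) \<le> 2" using bnd02[OF e0 e1, of "Suc t"] by simp
  show ?case
  proof (cases "eps * r \<le> 1")
    case True
    then have "2 \<le> 2 / (eps * r)" using e0 r0 by (simp add: field_simps)
    then have "yseq eps (Suc t) \<le> 2/(eps*r)" using b2 by linarith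
    then show ?thesis unfolding r_def .
  next
    case False
    have sq: "eps^2 * (real t + 1) > 1"
    proof -
      have "(eps * r)^2 = eps^2 * (real t + 1)" unfolding r_def by (simp add: power_mult_distrib)
      moreover have "(eps*r)^2 > 1^2" using False e0 r0
        by (intro power_strict_mono) auto
      ultimately show ?thesis by simp
    qed
    show ?thesis
    proof (cases "y \<ge> 1")
      case True
      then have yn: "yseq eps (Suc t) = a * (y - 1/(2*s))" using r by (simp add: sgnp_def)
      have "1/(2*s) \<ge> 0" using s1 by simp
      then have "yseq eps (Suc t) \<le> a * y" using yn a0 by (simp add: mult_left_mono)
      also have "\<dots> \<le> a * (2 / (eps * s))" using IH a0 by (intro mult_left_mono) auto
      also have "\<dots> \<le> 2 / (eps * r)"
      proof -
        have "(1-eps)^2 * (real t + 1) \<le> real t"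
        proof -
          have "(2*eps - eps^2) * (real t + 1) \<ge> eps^2 * (real t + 1)"
            using e0 e1 by (intro mult_right_mono) (auto simp: power2_eq_square)
          then show ?thesis using sq by (simp add: power2_eq_square algebra_simps)
        qed
        then have "(1-eps) * r \<le> s" unfolding r_def s_def using e1 by (intro sq_le_sqrt) auto
        then have "a * r \<le> s" using a0 r0 by (smt (verit) mult_right_mono)
        then show ?thesis using e0 r0 s1 by (simp add: field_simps)
      qed
      finally show ?thesis unfolding r_def .
    next
      case False
      then have yn: "yseq eps (Suc t) = a * (y + 1/(2*s))" using r by (simp add: sgnp_def)
      have "yseq eps (Suc t) \<le> a * (2 / (eps * s) + 1/(2*s))" unfolding yn using a0 IH by (intro mult_left_mono) auto
      also have "\<dots> = a * (4 + eps) / (2 * eps * s)" using e0 s1 by (simp add: field_simps)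
      also have "\<dots> \<le> 2 / (eps * r)"
      proof -
        have u4: "(real t + 1) * eps > 4"
        proof -
          have "((real t + 1) * eps) * eps > 1" using sq by (simp add: power2_eq_square algebra_simps)
          moreover have "((real t + 1) * eps) * eps \<le> ((real t + 1) * eps) * (1/4)"
            using e0 e1 by (intro mult_left_mono) auto
          ultimately show ?thesis by linarith
        qed
        have "(real t + 1) * eps * (24 - 9*eps) \<ge> 4 * (24 - 9 * eps)"
          using u4 e1 by (intro mult_right_mono) auto
        then have "(4 - 3*eps)^2 * (real t + 1) \<le> 16 * real t"
          using e1 by (simp add: power2_eq_square algebra_simps)
        then have "((4 - 3*eps)/4)^2 * (real t + 1) \<le> real t"
          by (simp add: power_divide)
        then have h: "((4 - 3*eps)/4) * r \<le> s" unfolding r_def s_def using e1 by (intro sq_le_sqrt) auto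
        have "a * (4 + eps) \<le> (1 - eps) * (4 + eps)" using a0 e0 by (intro mult_right_mono) auto
        also have "\<dots> \<le> 4 - 3*eps" using e0 by (simp add: algebra_simps)
        finally have "a * (4 + eps) \<le> 4 - 3 * eps" .
        then have "a * (4 + eps) * r \<le> (4 - 3*eps) * r" using r0 by (intro mult_right_mono) auto
        also have "\<dots> \<le> 4 * s" using h by (simp add: field_simps)
        finally have "a * (4 + eps) * r \<le> 4 * s" .
        then have "(a * (4 + eps) * r) / (2*eps*s*r) \<le> (4 * s) / (2*eps*s*r)"
          using e0 r0 s1 by (intro divide_right_mono) auto
        moreover have "(a * (4 + eps) * r) / (2*eps*s*r) = a * (4 + eps) / (2 * eps * s)"
          using r0 by simp
        moreover have "(4 * s) / (2*eps*s*r) = 2 / (eps * r)" using s1 by simp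
        ultimately show ?thesis by simp
      qed
      finally show ?thesis unfolding r_def .
    qed
  qed
qed

lemma small_y:
  assumes e0: "0 < eps" and e1: "eps \<le> 1/4"
    and t: "t \<ge> nat \<lceil>4/eps^2\<rceil> + 1"
  shows "yseq eps t < 1"
proof -
  have t1: "t \<ge> 1" using t by simp
  have "real t \<ge> real (nat \<lceil>4/eps^2\<rceil>) + 1" using t
    by (metis of_nat_1 of_nat_add of_nat_le_iff)
  then have "real t > 4/eps^2" using real_nat_ceiling_ge[of "4/eps^2"] by linarith
  then have "eps^2 * real t > 4" using e0 by (simp add: field_simps)
  moreover have "(eps * sqrt (real t))^2 = eps^2 * real t" by (simp add: power_mult_distrib)
  ultimately have "(eps * sqrt (real t))^2 > 2^2" by simp
  then have g: "eps * sqrt (real t) > 2"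
    using e0 by (meson power_less_imp_less_base mult_nonneg_nonneg less_imp_le real_sqrt_ge_zero of_nat_0_le_iff)
  have "yseq eps t \<le> 2 / (eps * sqrt (real t))" using bndup[OF e0 e1 t1] .
  also have "\<dots> < 1" using g by simp
  finally show ?thesis .
qed

lemma zstep:
  assumes e0: "0 < eps" and e1: "eps \<le> 1/4"
    and t: "t \<ge> nat \<lceil>4/eps^2\<rceil> + 1"
  shows "yseq eps (Suc t) * sqrt (real (Suc t)) \<ge> ((1-2*eps)/(1-eps)) * (yseq eps t * sqrt (real t) + 1/2)"
proof -
  define a where "a = (1-2*eps)/(1-eps)"
  define y where "y = yseq eps t"
  define s where "s = sqrt (real t)"
  have t1: "t \<ge> 1" using t by simp
  have s1: "s \<ge> 1" using t1 s_def by simp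
  have a0: "0 \<le> a" using a_bounds(1)[OF e0 e1] unfolding a_def by auto
  have y1: "y < 1" using small_y[OF e0 e1 t] y_def by simp
  have yn: "yseq eps (Suc t) = a * (y + 1/(2*s))"
    using yrec[OF e0 e1 t1] a_def y_def s_def y1 by (simp add: sgnp_def)
  have y0: "yseq eps (Suc t) \<ge> 0" using bnd02[OF e0 e1, of "Suc t"] by simp
  have "yseq eps (Suc t) * sqrt (real (Suc t)) \<ge> yseq eps (Suc t) * s"
    unfolding s_def using y0 by (intro mult_left_mono) auto
  moreover have "yseq eps (Suc t) * s = a * (y * s + 1/2)" unfolding yn using s1
    by (simp add: field_simps)
  ultimately show ?thesis unfolding a_def y_def s_def by simp
qed

lemma zk:
  assumes e0: "0 < eps" and e1: "eps \<le> 1/4"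
  defines "T0 \<equiv> nat \<lceil>4/eps^2\<rceil> + 1"
  defines "a \<equiv> (1-2*eps)/(1-eps)"
  defines "L \<equiv> (1-2*eps)/(2*eps)"
  shows "yseq eps (T0 + k) * sqrt (real (T0 + k)) \<ge> L * (1 - a^k)"
proof (induction k)
  case 0
  have "yseq eps T0 \<ge> 0" using bnd02[OF e0 e1, of T0] T0_def by simp
  then show ?case by simp
next
  case (Suc k)
  have La: "L * (1 - a) = a / 2" unfolding L_def a_def using e0 e1 by (simp add: field_simps)
  have a0: "0 \<le> a" using a_bounds(1)[OF e0 e1] unfolding a_def by auto
  have "yseq eps (T0 + Suc k) * sqrt (real (T0 + Suc k)) \<ge> a * (yseq eps (T0+k) * sqrt (real (T0+k)) + 1/2)"
    using zstep[OF e0 e1, of "T0+k"] unfolding T0_def a_def by simp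
  moreover have "a * (yseq eps (T0+k) * sqrt (real (T0+k)) + 1/2) \<ge> a * (L * (1 - a^k) + 1/2)"
    using Suc a0 by (intro mult_left_mono) auto
  moreover have "a * (L * (1 - a^k) + 1/2) = L * (1 - a^Suc k)"
  proof -
    have "a * (L * (1 - a^k) + 1/2) = a * L - L * a^Suc k + a/2" by (simp add: algebra_simps)
    also have "\<dots> = L * (1 - a^Suc k)" using La by (simp add: algebra_simps)
    finally show ?thesis .
  qed
  ultimately show ?case by simp
qed

theorem lemma4:
  fixes eps :: real
  assumes "0 < eps" and "eps \<le> 1/4"
  shows "(\<forall>t\<ge>1. 0 \<le> yseq eps t \<and> yseq eps t \<le> 2)
       \<and> (\<forall>t\<ge>1. yseq eps t \<le> 2 * inverse eps / sqrt (real t))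
       \<and> (\<exists>t1. \<forall>t\<ge>t1. t \<ge> 1 \<longrightarrow> yseq eps t \<ge> inverse eps / (16 * sqrt (real t)))"
proof (intro conjI)
  note e0 = assms(1) and e1 = assms(2)
  show "\<forall>t\<ge>1. 0 \<le> yseq eps t \<and> yseq eps t \<le> 2" using bnd02[OF e0 e1] by blast
  show "\<forall>t\<ge>1. yseq eps t \<le> 2 * inverse eps / sqrt (real t)"
    using bndup[OF e0 e1] by (simp add: field_simps)
  define T0 where "T0 = nat \<lceil>4/eps^2\<rceil> + 1"
  define a where "a = (1-2*eps)/(1-eps)"
  define L where "L = (1-2*eps)/(2*eps)"
  have a0: "0 \<le> a" "a \<le> 1 - eps" using a_bounds(1,2)[OF e0 e1] unfolding a_def by auto
  have "a < 1" using a0 e0 by simp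
  then obtain K where K: "a^K < 1/2" using real_arch_pow_inv[of "1/2" a] by auto
  show "\<exists>t1. \<forall>t\<ge>t1. t \<ge> 1 \<longrightarrow> yseq eps t \<ge> inverse eps / (16 * sqrt (real t))"
  proof (intro exI allI impI)
    fix t assume t: "T0 + K \<le> t" and "t \<ge> 1"
    define k where "k = t - T0"
    have tk: "t = T0 + k" "K \<le> k" using t k_def by auto
    have "a^k \<le> a^K" using tk a0 e0 by (intro power_decreasing) auto
    then have "1 - a^k \<ge> 1/2" using K by simp
    moreover have "L \<ge> 0" unfolding L_def using e0 e1 by simp
    ultimately have "L * (1 - a^k) \<ge> L * (1/2)" by (intro mult_left_mono) auto
    moreover have "L * (1/2) \<ge> 1 / (16 * eps)" unfolding L_def using e0 e1 by (simp add: field_simps)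
    ultimately have z: "yseq eps t * sqrt (real t) \<ge> 1 / (16 * eps)"
      using zk[OF e0 e1, of k] unfolding tk(1) T0_def a_def L_def by linarith
    have sp: "sqrt (real t) > 0" using \<open>t \<ge> 1\<close> by simp
    have "inverse eps / (16 * sqrt (real t)) = (1 / (16 * eps)) / sqrt (real t)"
      by (simp add: field_simps)
    also have "\<dots> \<le> (yseq eps t * sqrt (real t)) / sqrt (real t)"
      using z sp by (intro divide_right_mono) auto
    also have "\<dots> = yseq eps t" using sp by simp
    finally show "yseq eps t \<ge> inverse eps / (16 * sqrt (real t))" .
  qed
qed

end
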